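(* For all $n$, $\mathrm{Sort}_n(132,321)=\mathrm{Av}_n(123,132^{\star})$.
   Context: $\mathrm{Av}_n(123,132^{\star})$ is the set of $x\in S_n$ that avoid the classical pattern $123$ (no subsequence order-isomorphic to $123$) and the bivincular pattern $132^{\star}$, where an occurrence of $132^{\star}$ in $x=x_1\cdots x_n$ is a pair of indices $a<b<n$ with $x_a<x_{b+1}$ and $x_b=x_{b+1}+1$. For a set $T$ of patterns, the map $s_T$ is defined as follows: the entries of the input permutation are read from left to right, with an initially empty stack. At each step, if the input is nonempty and pushing the next input entry onto the stack produces a stack whose contents, read from top to bottom, avoid every pattern in $T$, that entry is pushed; otherwise the top entry of the stack is popped and appended to the output. When the input is exhausted, the remaining stack entries are popped one at a time to the output. Write $s_{\sigma,\tau}=s_{\{\sigma,\tau\}}$ and $s=s_{\{21\}}$ (West's stack-sorting map). $\mathrm{Sort}_n(\sigma,\tau)$ is the set of $x\in S_n$ with $s(s_{\sigma,\tau}(x))=12\cdots n$. *)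

theory Defs
  imports Main "HOL-Library.Sublist"
begin

definition perms :: "nat \<Rightarrow> nat list set" where
  "perms n = {xs. distinct xs \<and> set xs = {1..n}}"

definition order_iso :: "nat list \<Rightarrow> nat list \<Rightarrow> bool" where
  "order_iso ys p \<longleftrightarrow> length ys = length p \<and>
     (\<forall>i<length p. \<forall>j<length p. (ys ! i < ys ! j) = (p ! i < p ! j))"

definition contains :: "nat list \<Rightarrow> nat list \<Rightarrow> bool" where
  "contains p xs \<longleftrightarrow> (\<exists>ys. subseq ys xs \<and> order_iso ys p)"

definition avoids :: "nat list \<Rightarrow> nat list \<Rightarrow> bool" where
  "avoids p xs \<longleftrightarrow> \<not> contains p xs"

definition avoids_all :: "nat list list \<Rightarrow> nat list \<Rightarrow> bool" where
  "avoids_all T xs \<longleftrightarrow> (\<forall>p\<in>set T. avoids p xs)"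

text \<open>Occurrence of the bivincular pattern 132*: 1-based indices a < b < n with
  x_a < x_(b+1) and x_b = x_(b+1) + 1 (here 0-based).\<close>
definition contains_132star :: "nat list \<Rightarrow> bool" where
  "contains_132star xs \<longleftrightarrow> (\<exists>a b. a < b \<and> b + 1 < length xs \<and>
      xs ! a < xs ! (b + 1) \<and> xs ! b = xs ! (b + 1) + 1)"

text \<open>Arguments: remaining input, stack
  (head = top, so the list is the stack read top to bottom).
  Convention: pushing onto the empty stack is always allowed (irrelevant when all
  patterns in T have length at least 2).\<close>
fun stk :: "nat list list \<Rightarrow> nat list \<Rightarrow> nat list \<Rightarrow> nat list" where
  "stk T [] st = st"
| "stk T (x # inp) [] = stk T inp [x]"
| "stk T (x # inp) (y # st) =
     (if avoids_all T (x # y # st) then stk T inp (x # y # st)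
      else y # stk T (x # inp) st)"

definition s_T :: "nat list list \<Rightarrow> nat list \<Rightarrow> nat list" where
  "s_T T xs = stk T xs []"

definition west_s :: "nat list \<Rightarrow> nat list" where
  "west_s xs = s_T [[2,1]] xs"

definition Sort :: "nat \<Rightarrow> nat list \<Rightarrow> nat list \<Rightarrow> nat list set" where
  "Sort n \<sigma> \<tau> = {x \<in> perms n. west_s (s_T [\<sigma>, \<tau>] x) = [1..<n+1]}"

definition Av_123_132star :: "nat \<Rightarrow> nat list set" where
  "Av_123_132star n = {x \<in> perms n. avoids [1,2,3] x \<and> \<not> contains_132star x}"

end

theory Submission
  imports Defs "HOL-Library.Multiset"
begin

lemma subseq_sorted_wrt:
  assumes "subseq xs ys" "sorted_wrt R ys" shows "sorted_wrt R xs"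
  using assms
proof (induction rule: list_emb.induct)
  case (list_emb_Cons2 x y xs ys)
  then show ?case by (auto elim: list_emb_set)
qed auto

lemma oi132: "order_iso [a,b,c] [1,3,2] \<longleftrightarrow> a < c \<and> c < b"
  unfolding order_iso_def
  by (simp add: numeral_3_eq_3 All_less_Suc) linarith


lemma len3: "length ys = 3 \<Longrightarrow> \<exists>a b c. ys = [a,b,c]"
  by (simp add: numeral_3_eq_3 length_Suc_conv) blast

lemma contains3:
  assumes "length p = 3"
  shows "contains p L \<longleftrightarrow> (\<exists>a b c. subseq [a,b,c] L \<and> order_iso [a,b,c] p)"
proof
  assume "contains p L"
  then obtain ys where ys: "subseq ys L" "order_iso ys p" unfolding contains_def by auto
  then have "length ys = 3" using assms unfolding order_iso_def by auto
  then obtain a b c where "ys = [a,b,c]" using len3 by blast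
  then show "\<exists>a b c. subseq [a,b,c] L \<and> order_iso [a,b,c] p" using ys by blast
qed (auto simp: contains_def)

lemma oi321: "order_iso [a,b,c] [3,2,1] \<longleftrightarrow> c < b \<and> b < a"
  unfolding order_iso_def
  by (simp add: numeral_3_eq_3 All_less_Suc) linarith
lemma oi123: "order_iso [a,b,c] [1,2,3] \<longleftrightarrow> a < b \<and> b < c"
  unfolding order_iso_def
  by (simp add: numeral_3_eq_3 All_less_Suc) linarith
lemma oi231: "order_iso [a,b,c] [2,3,1] \<longleftrightarrow> c < a \<and> a < b"
  unfolding order_iso_def
  by (simp add: numeral_3_eq_3 All_less_Suc) linarith

lemma c132: "contains [1,3,2] L \<longleftrightarrow> (\<exists>a b c. subseq [a,b,c] L \<and> a < c \<and> c < b)"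
  using contains3[of "[1,3,2]" L] unfolding oi132 by simp
lemma c321: "contains [3,2,1] L \<longleftrightarrow> (\<exists>a b c. subseq [a,b,c] L \<and> c < b \<and> b < a)"
  using contains3[of "[3,2,1]" L] unfolding oi321 by simp
lemma c123: "contains [1,2,3] L \<longleftrightarrow> (\<exists>a b c. subseq [a,b,c] L \<and> a < b \<and> b < c)"
  using contains3[of "[1,2,3]" L] unfolding oi123 by simp
lemma c231: "contains [2,3,1] L \<longleftrightarrow> (\<exists>a b c. subseq [a,b,c] L \<and> c < a \<and> a < b)"
  using contains3[of "[2,3,1]" L] unfolding oi231 by simp

lemma c21: "contains [2,1] L \<longleftrightarrow> (\<exists>a b. subseq [a,b] L \<and> b < a)"
proof -
  have "order_iso ys [2,1] \<longleftrightarrow> (\<exists>a b. ys = [a,b] \<and> b < a)" for ys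
    unfolding order_iso_def
    by (cases ys; cases "tl ys"; auto simp: All_less_Suc)
  then show ?thesis unfolding contains_def by auto
qed

lemma subseq_CC: "subseq (a#xs) (y#ys) \<longleftrightarrow> (a = y \<and> subseq xs ys) \<or> subseq (a#xs) ys"
  by (cases "a = y") (auto dest: subseq_Cons')

lemma sorted_sub2: "subseq [b,c] st \<Longrightarrow> sorted_wrt (<) st \<Longrightarrow> b < c"
  using subseq_sorted_wrt by fastforce

lemma sorted_sub3: "subseq [a,b,c] st \<Longrightarrow> sorted_wrt (<) st \<Longrightarrow> a < b \<and> b < c"
  using subseq_sorted_wrt by fastforce

lemma contains_mono: "contains p L' \<Longrightarrow> subseq L' L \<Longrightarrow> contains p L"
  unfolding contains_def using subseq_order.trans by blast

definition Tm :: "nat list list" where "Tm = [[1,3,2],[3,2,1]]"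

lemma avTm: "avoids_all Tm L \<longleftrightarrow> \<not> contains [1,3,2] L \<and> \<not> contains [3,2,1] L"
  by (simp add: avoids_all_def Tm_def avoids_def)


lemma sub3_cases:
  assumes "subseq [a,b,c] (x#y#st)"
  shows "(a = x \<and> b = y \<and> c \<in> set st) \<or> subseq [b,c] st \<or> subseq [a,b,c] st"
proof -
  have 1: "(b = y \<and> c \<in> set st) \<or> subseq [b,c] st" if "subseq [b,c] (y#st)"
    using that unfolding subseq_CC[of b] by (auto simp: subseq_singleton_left)
  have 2: "subseq [b,c] st \<or> subseq [a,b,c] st" if "subseq [a,b,c] (y#st)"
    using that unfolding subseq_CC[of a] by auto
  show ?thesis using assms 1 2 unfolding subseq_CC[of a] by blast
qed

lemma push_char:
  assumes "sorted_wrt (<) st"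
  shows "avoids_all Tm (x # y # st) \<longleftrightarrow> (\<forall>s\<in>set st. \<not>(x<s \<and> s<y) \<and> \<not>(s<y \<and> y<x))"
proof
  assume A: "avoids_all Tm (x # y # st)"
  show "\<forall>s\<in>set st. \<not>(x<s \<and> s<y) \<and> \<not>(s<y \<and> y<x)"
  proof (intro ballI conjI notI)
    fix s assume "s \<in> set st" "x<s \<and> s<y"
    then have "subseq [x,y,s] (x#y#st)" by (simp add: subseq_singleton_left)
    then show False using A \<open>x<s \<and> s<y\<close> unfolding avTm c132 by blast
  next
    fix s assume "s \<in> set st" "s<y \<and> y<x"
    then have "subseq [x,y,s] (x#y#st)" by (simp add: subseq_singleton_left)
    then show False using A \<open>s<y \<and> y<x\<close> unfolding avTm c321 by blast
  qed
next
  assume B: "\<forall>s\<in>set st. \<not>(x<s \<and> s<y) \<and> \<not>(s<y \<and> y<x)"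
  have sub: "b < c" if "subseq [b,c] st" for b c using sorted_sub2[OF that assms] .
  have sub3: "a < b \<and> b < c" if "subseq [a,b,c] st" for a b c using sorted_sub3[OF that assms] .
  have "\<not> contains [1,3,2] (x#y#st)"
  proof
    assume "contains [1,3,2] (x#y#st)"
    then obtain a b c where abc: "subseq [a,b,c] (x#y#st)" "a < c" "c < b" unfolding c132 by blast
    have "(a = x \<and> b = y \<and> c \<in> set st) \<or> subseq [b,c] st \<or> subseq [a,b,c] st"
      using sub3_cases[OF abc(1)] .
    then show False
    proof (elim disjE)
      assume "a = x \<and> b = y \<and> c \<in> set st" then show False using B abc by auto
    next
      assume "subseq [b,c] st" from sub[OF this] show False using abc by simp
    next
      assume "subseq [a,b,c] st" from sub3[OF this] show False using abc by simp
    qed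
  qed
  moreover have "\<not> contains [3,2,1] (x#y#st)"
  proof
    assume "contains [3,2,1] (x#y#st)"
    then obtain a b c where abc: "subseq [a,b,c] (x#y#st)" "c < b" "b < a" unfolding c321 by blast
    have "(a = x \<and> b = y \<and> c \<in> set st) \<or> subseq [b,c] st \<or> subseq [a,b,c] st"
      using sub3_cases[OF abc(1)] .
    then show False
    proof (elim disjE)
      assume "a = x \<and> b = y \<and> c \<in> set st" then show False using B abc by auto
    next
      assume "subseq [b,c] st" from sub[OF this] show False using abc by simp
    next
      assume "subseq [a,b,c] st" from sub3[OF this] show False using abc by simp
    qed
  qed
  ultimately show "avoids_all Tm (x # y # st)" unfolding avTm by blast
qed


fun run :: "nat list list \<Rightarrow> nat list \<Rightarrow> nat list \<Rightarrow> nat list \<times> nat list" where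
  "run T [] st = ([], st)"
| "run T (x # inp) [] = run T inp [x]"
| "run T (x # inp) (y # st) =
     (if avoids_all T (x # y # st) then run T inp (x # y # st)
      else (let r = run T (x # inp) st in (y # fst r, snd r)))"

lemma stk_append: "stk T (u @ v) st = fst (run T u st) @ stk T v (snd (run T u st))"
  by (induction T u st rule: run.induct) (auto simp: Let_def)

lemma stk_run: "stk T u st = fst (run T u st) @ snd (run T u st)"
  using stk_append[where v="[]"] by simp

lemma mset_run: "mset (fst (run T u st)) + mset (snd (run T u st)) = mset u + mset st"
  by (induction T u st rule: run.induct) (auto simp: Let_def)

lemma mset_stk: "mset (stk T u st) = mset u + mset st"
  by (metis mset_run stk_run mset_append)

lemma set_run: "set (fst (run T u st)) \<union> set (snd (run T u st)) = set u \<union> set st"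
  by (metis mset_run set_mset_mset set_mset_union)

lemma run_top: "u \<noteq> [] \<Longrightarrow> \<exists>s'. snd (run T u st) = last u # s'"
  by (induction T u st rule: run.induct) (auto simp: Let_def)

lemma subseq_stk: "subseq st (stk T u st)"
  by (induction T u st rule: stk.induct) (auto dest: subseq_Cons')

lemma avoids_single: "2 \<le> length p \<Longrightarrow> avoids p [x]"
  unfolding avoids_def contains_def order_iso_def
  using list_emb_length by fastforce

lemma avoids_sub: "avoids p L \<Longrightarrow> subseq L' L \<Longrightarrow> avoids p L'"
  unfolding avoids_def using contains_mono by blast

lemma avoids_all_tl: "avoids_all T (y # st) \<Longrightarrow> avoids_all T st"
  unfolding avoids_all_def using avoids_sub[of _ "y # st" st] by auto

lemma run_valid:
  assumes "\<forall>p\<in>set T. 2 \<le> length p" "avoids_all T st"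
  shows "avoids_all T (snd (run T u st))"
  using assms
proof (induction T u st rule: run.induct)
  case (2 T x inp)
  then show ?case by (simp add: avoids_all_def avoids_single)
next
  case (3 T x inp y st)
  then show ?case by (auto simp: Let_def dest: avoids_all_tl)
qed simp


lemma subseq_set: "subseq xs ys \<Longrightarrow> set xs \<subseteq> set ys"
  by (induction rule: list_emb.induct) auto

lemma sub3_cases':
  assumes "subseq [a,b,c] (x#y#st)"
  shows "(a = x \<and> b = y \<and> c \<in> set st) \<or> ((a = x \<or> a = y) \<and> subseq [b,c] st) \<or> subseq [a,b,c] st"
proof -
  have 1: "(b = y \<and> c \<in> set st) \<or> subseq [b,c] st" if "subseq [b,c] (y#st)"
    using that unfolding subseq_CC[of b] by (auto simp: subseq_singleton_left)
  have 2: "(a = y \<and> subseq [b,c] st) \<or> subseq [a,b,c] st" if "subseq [a,b,c] (y#st)"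
    using that unfolding subseq_CC[of a] by auto
  show ?thesis using assms 1 2 unfolding subseq_CC[of a] by blast
qed

lemma avoids_Nil: "p \<noteq> [] \<Longrightarrow> avoids p []"
  unfolding avoids_def contains_def order_iso_def by auto

lemma Tm_len: "\<forall>p\<in>set Tm. 2 \<le> length p" by (simp add: Tm_def)

lemma Tm_Nil: "avoids_all Tm []" by (simp add: avoids_all_def Tm_def avoids_Nil)

lemma keep_push:
  assumes v: "avoids_all Tm (m # R)" and gt: "\<forall>r\<in>set R. m < r"
  shows "avoids_all Tm (x # m # R)"
proof -
  have n132: "\<not> subseq [a,b,c] (m # R)" if "a < c" "c < b" for a b c
    using v that unfolding avTm c132 by blast
  have n321: "\<not> subseq [a,b,c] (m # R)" if "c < b" "b < a" for a b c
    using v that unfolding avTm c321 by blast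
  have A: "\<not> contains [1,3,2] (x # m # R)"
  proof
    assume "contains [1,3,2] (x # m # R)"
    then obtain a b c where abc: "subseq [a,b,c] (x#m#R)" "a < c" "c < b" unfolding c132 by blast
    from sub3_cases'[OF abc(1)] show False
    proof (elim disjE conjE)
      assume "c \<in> set R" "b = m" then show False using gt abc by auto
    next
      assume s: "subseq [b,c] R"
      then have "c \<in> set R" using subseq_set by fastforce
      then have "m < c" using gt by auto
      moreover have "subseq [m,b,c] (m # R)" by (rule subseq_Cons2[OF s])
      ultimately show False using n132 abc by blast
    next
      assume s: "subseq [b,c] R"
      then have "c \<in> set R" using subseq_set by fastforce
      then have "m < c" using gt by auto
      moreover have "subseq [m,b,c] (m # R)" by (rule subseq_Cons2[OF s])
      ultimately show False using n132 abc by blast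
    next
      assume "subseq [a,b,c] R"
      then have "subseq [a,b,c] (m # R)" by (rule list_emb_Cons)
      then show False using n132 abc by blast
    qed
  qed
  have B: "\<not> contains [3,2,1] (x # m # R)"
  proof
    assume "contains [3,2,1] (x # m # R)"
    then obtain a b c where abc: "subseq [a,b,c] (x#m#R)" "c < b" "b < a" unfolding c321 by blast
    from sub3_cases'[OF abc(1)] show False
    proof (elim disjE conjE)
      assume "c \<in> set R" "b = m" then show False using gt abc by auto
    next
      assume s: "subseq [b,c] R"
      then have "c \<in> set R" using subseq_set by fastforce
      then have "m < c" using gt by auto
      moreover have "subseq [m,b,c] (m # R)" by (rule subseq_Cons2[OF s])
      ultimately show False using n132 abc by blast
    next
      assume s: "subseq [b,c] R"
      then have "c \<in> set R" using subseq_set by fastforce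
      then have "m < c" using gt by auto
      moreover have "subseq [m,b,c] (m # R)" by (rule subseq_Cons2[OF s])
      ultimately show False using n132 abc by blast
    next
      assume "subseq [a,b,c] R"
      then have "subseq [a,b,c] (m # R)" by (rule list_emb_Cons)
      then show False using n321 abc by blast
    qed
  qed
  show ?thesis using A B unfolding avTm by blast
qed

lemma run_keep:
  assumes "T = Tm" "avoids_all T st" "st = P @ m # R" "\<forall>r\<in>set R. m < r"
  shows "\<exists>P'. snd (run T u st) = P' @ m # R"
  using assms
proof (induction T u st arbitrary: P rule: run.induct)
  case (1 T st)
  then show ?case by auto
next
  case (2 T x inp)
  then show ?case by simp
next
  case (3 T x inp y st)
  show ?case
  proof (cases "avoids_all T (x # y # st)")
    case True
    have e: "x # y # st = (x # P) @ m # R" using 3(5) by simp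
    from 3(1)[OF True 3(3) True e 3(6)] obtain P' where "snd (run T inp (x#y#st)) = P' @ m # R" by blast
    then show ?thesis using True by simp
  next
    case False
    show ?thesis
    proof (cases P)
      case Nil
      then have "y = m" "st = R" using 3(5) by auto
      then show ?thesis using False keep_push 3(3,4,6) by auto
    next
      case (Cons p P1)
      then have "st = P1 @ m # R" using 3(5) by auto
      moreover have "avoids_all T st" using 3(4) avoids_all_tl by blast
      moreover have "run T (x#inp) (y#st) = (y # fst (run T (x # inp) st), snd (run T (x # inp) st))"
        using False by (simp add: Let_def)
      ultimately show ?thesis using 3(2)[OF False 3(3), of P1] 3(6) by simp
    qed
  qed
qed


lemma run_append:
  "run T (u @ v) st = (fst (run T u st) @ fst (run T v (snd (run T u st))), snd (run T v (snd (run T u st))))"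
  by (induction T u st rule: run.induct) (auto simp: Let_def)

lemma distinct_run: "distinct (u @ st) \<Longrightarrow> distinct (fst (run T u st) @ snd (run T u st))"
  using mset_run[of T u st] mset_eq_imp_distinct_iff[of "fst (run T u st) @ snd (run T u st)" "u @ st"]
  by simp

lemma set_snd_run: "set (snd (run T u st)) \<subseteq> set u \<union> set st"
  using set_run[of T u st] by blast

lemma lrmin:
  assumes "u \<noteq> []" "distinct u"
  shows "\<exists>P R. snd (run Tm u []) = P @ Min (set u) # R \<and> (\<forall>r\<in>set R. Min (set u) < r)"
proof -
  define m where "m = Min (set u)"
  have mu: "m \<in> set u" using assms m_def by simp
  then obtain u1 u2 where u: "u = u1 @ m # u2" by (meson split_list)
  obtain R where R: "snd (run Tm (u1 @ [m]) []) = m # R" using run_top[of "u1 @ [m]" Tm "[]"] by auto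
  have d: "distinct (fst (run Tm (u1 @ [m]) []) @ snd (run Tm (u1 @ [m]) []))"
    using distinct_run[of "u1 @ [m]" "[]" Tm] assms u by simp
  then have "m \<notin> set R" using R by simp
  moreover have "set R \<subseteq> set u1 \<union> {m}" using set_snd_run[of Tm "u1 @ [m]" "[]"] R by auto
  ultimately have "set R \<subseteq> set u1" by blast
  moreover have "\<forall>z\<in>set u1. m < z"
  proof
    fix z assume "z \<in> set u1"
    then have "z \<in> set u" "z \<noteq> m" using u assms(2) by auto
    then show "m < z" using m_def by (simp add: order_less_le)
  qed
  ultimately have gt: "\<forall>r\<in>set R. m < r" by blast
  have v: "avoids_all Tm (m # R)" using run_valid[OF Tm_len Tm_Nil, of "u1 @ [m]"] R by simp
  have "snd (run Tm u []) = snd (run Tm u2 (m # R))"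
    using u run_append[of Tm "u1 @ [m]" u2 "[]"] R by simp
  then show ?thesis using run_keep[OF refl v _ gt, of "[]" u2] gt unfolding m_def by auto
qed


lemma star_push:
  assumes v: "avoids_all Tm (b # L)" and bc: "b = Suc c" and nb: "b \<notin> set L"
  shows "avoids_all Tm (c # b # L)"
proof -
  have n132: "\<not> subseq [x,y,z] (b # L)" if "x < z" "z < y" for x y z
    using v that unfolding avTm c132 by blast
  have n321: "\<not> subseq [x,y,z] (b # L)" if "z < y" "y < x" for x y z
    using v that unfolding avTm c321 by blast
  have A: "\<not> contains [1,3,2] (c # b # L)"
  proof
    assume "contains [1,3,2] (c # b # L)"
    then obtain x y z where abc: "subseq [x,y,z] (c#b#L)" "x < z" "z < y" unfolding c132 by blast
    from sub3_cases'[OF abc(1)] show False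
    proof (elim disjE conjE)
      assume "x = c" "y = b" then show False using abc bc by auto
    next
      assume s: "subseq [y,z] L" and "x = c"
      then have "z \<in> set L" using subseq_set by fastforce
      then have "z \<noteq> b" using nb by auto
      have sb: "subseq [b,y,z] (b # L)" by (rule subseq_Cons2[OF s])
      show False
      proof (cases "b < z")
        case True then show False using n132[OF True] sb abc by blast
      next
        case False then show False using \<open>z \<noteq> b\<close> bc abc \<open>x = c\<close> by auto
      qed
    next
      assume s: "subseq [y,z] L" and "x = b"
      have sb: "subseq [b,y,z] (b # L)" by (rule subseq_Cons2[OF s])
      then show False using n132 abc \<open>x = b\<close> by blast
    next
      assume "subseq [x,y,z] L"
      then have "subseq [x,y,z] (b # L)" by (rule list_emb_Cons)
      then show False using n132 abc by blast
    qed
  qed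
  have B: "\<not> contains [3,2,1] (c # b # L)"
  proof
    assume "contains [3,2,1] (c # b # L)"
    then obtain x y z where abc: "subseq [x,y,z] (c#b#L)" "z < y" "y < x" unfolding c321 by blast
    from sub3_cases'[OF abc(1)] show False
    proof (elim disjE conjE)
      assume "x = c" "y = b" then show False using abc bc by auto
    next
      assume s: "subseq [y,z] L" and "x = c"
      have sb: "subseq [b,y,z] (b # L)" by (rule subseq_Cons2[OF s])
      have "y < b" using abc bc \<open>x = c\<close> by auto
      then show False using n321 sb abc by blast
    next
      assume s: "subseq [y,z] L" and "x = b"
      have sb: "subseq [b,y,z] (b # L)" by (rule subseq_Cons2[OF s])
      then show False using n321 abc \<open>x = b\<close> by blast
    next
      assume "subseq [x,y,z] L"
      then have "subseq [x,y,z] (b # L)" by (rule list_emb_Cons)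
      then show False using n321 abc by blast
    qed
  qed
  show ?thesis using A B unfolding avTm by blast
qed

lemma nec132:
  assumes d: "distinct x" and x: "x = u @ b # c # w" and a: "a \<in> set u" "a < c" and bc: "b = Suc c"
  shows "contains [2,3,1] (stk Tm x [])"
proof -
  define m where "m = Min (set u)"
  have un: "u \<noteq> []" using a by auto
  have du: "distinct u" using d x by simp
  have mc: "m < c" using a m_def by (meson Min_le finite_set le_less_trans)
  obtain P R where PR: "snd (run Tm u []) = P @ m # R" "\<forall>r\<in>set R. m < r"
    using lrmin[OF un du] m_def by blast
  define s1 where "s1 = snd (run Tm u [])"
  have v1: "avoids_all Tm s1" using run_valid[OF Tm_len Tm_Nil] s1_def by blast
  define s2 where "s2 = snd (run Tm [b] s1)"
  obtain s2' where s2': "s2 = b # s2'" using run_top[of "[b]" Tm s1] s2_def by auto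
  obtain P2 where P2: "s2 = P2 @ m # R" using run_keep[OF refl v1 _ PR(2), of P "[b]"] PR(1) s1_def s2_def by auto
  have "b \<noteq> m" using mc bc by auto
  then have ms: "m \<in> set s2'" using s2' P2 by (cases P2) auto
  have v2: "avoids_all Tm s2" using run_valid[OF Tm_len v1] s2_def by blast
  have "set s2 \<subseteq> set [b] \<union> set s1" using set_snd_run s2_def by blast
  moreover have "set s1 \<subseteq> set u" using set_snd_run[of Tm u "[]"] s1_def by simp
  ultimately have "set s2' \<subseteq> set u \<union> {b}" using s2' by auto
  moreover have "b \<notin> set u" using d x by simp
  moreover have "distinct s2" proof -
    have "distinct (u @ [b])" using d x by simp
    then have "distinct (fst (run Tm (u @ [b]) []) @ snd (run Tm (u @ [b]) []))" using distinct_run by fastforce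
    moreover have "snd (run Tm (u @ [b]) []) = s2" using run_append[of Tm u "[b]" "[]"] s1_def s2_def by simp
    ultimately show ?thesis by simp
  qed
  ultimately have nb: "b \<notin> set s2'" using s2' by auto
  have push: "avoids_all Tm (c # b # s2')" using star_push[OF _ bc nb] v2 s2' by simp
  have "stk Tm x [] = fst (run Tm u []) @ stk Tm ([b] @ c # w) s1"
    using stk_append[of Tm u "b # c # w" "[]"] x s1_def by simp
  also have "stk Tm ([b] @ c # w) s1 = fst (run Tm [b] s1) @ stk Tm (c # w) s2"
    using stk_append[of Tm "[b]" "c # w" s1] s2_def by simp
  also have "stk Tm (c # w) s2 = stk Tm w (c # b # s2')" using push s2' by simp
  finally have o: "stk Tm x [] = fst (run Tm u []) @ fst (run Tm [b] s1) @ stk Tm w (c # b # s2')" .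
  have "subseq [c,b,m] (c # b # s2')" using ms by (simp add: subseq_singleton_left)
  then have "subseq [c,b,m] (stk Tm w (c # b # s2'))" using subseq_stk subseq_order.trans by blast
  then have "subseq [c,b,m] (stk Tm x [])" unfolding o by (simp add: list_emb_append2)
  then show ?thesis unfolding c231 using mc bc by auto
qed


lemma nec123:
  assumes d: "distinct x" and x: "x = u @ q # v @ r # w" and p: "p \<in> set u" "p < q" and qr: "q < r"
  shows "contains [2,3,1] (stk Tm x [])"
proof -
  define m where "m = Min (set u)"
  have un: "u \<noteq> []" using p by auto
  have du: "distinct u" using d x by simp
  have mq: "m < q" using p m_def by (meson Min_le finite_set le_less_trans)
  obtain P R where PR: "snd (run Tm u []) = P @ m # R" "\<forall>r\<in>set R. m < r"
    using lrmin[OF un du] m_def by blast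
  define s1 where "s1 = snd (run Tm u [])"
  have v1: "avoids_all Tm s1" using run_valid[OF Tm_len Tm_Nil] s1_def by blast
  define z where "z = q # v @ [r]"
  define s3 where "s3 = snd (run Tm z s1)"
  define o2 where "o2 = fst (run Tm z s1)"
  obtain s3' where s3': "s3 = r # s3'" using run_top[of z Tm s1] s3_def z_def by auto
  obtain P3 where P3: "s3 = P3 @ m # R" using run_keep[OF refl v1 _ PR(2), of P z] PR(1) s1_def s3_def by auto
  have v3: "avoids_all Tm s3" using run_valid[OF Tm_len v1] s3_def by blast
  have s1u: "set s1 \<subseteq> set u" using set_snd_run[of Tm u "[]"] s1_def by simp
  have Ru: "set R \<subseteq> set u" using s1u PR(1) s1_def by auto
  have qu: "q \<notin> set u" using d x by simp
  have "q \<in> set o2 \<union> set s3" using set_run[of Tm z s1] o2_def s3_def z_def by auto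
  moreover have "q \<notin> set s3"
  proof
    assume q3: "q \<in> set s3"
    have "q \<notin> set R" using Ru qu by blast
    moreover have "q \<noteq> m" using mq by simp
    ultimately have "q \<in> set P3" using q3 P3 by auto
    moreover have "r \<noteq> m" using mq qr by simp
    ultimately obtain P4 where P4: "P3 = r # P4" "q \<in> set P4" using s3' P3 qr
      by (cases P3) auto
    have "subseq ([r] @ [q] @ [m]) ([r] @ P4 @ (m # R))"
      using P4(2) by (intro list_emb_append_mono) (auto simp: subseq_singleton_left)
    then have "subseq [r,q,m] s3" using P3 P4 by simp
    then have "contains [3,2,1] s3" unfolding c321 using mq qr by blast
    then show False using v3 unfolding avTm by blast
  qed
  ultimately have qo: "q \<in> set o2" by blast
  have "stk Tm x [] = fst (run Tm u []) @ stk Tm (z @ w) s1"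
    using stk_append[of Tm u "z @ w" "[]"] x s1_def z_def by simp
  also have "stk Tm (z @ w) s1 = o2 @ stk Tm w s3"
    using stk_append[of Tm z w s1] o2_def s3_def by simp
  finally have o: "stk Tm x [] = fst (run Tm u []) @ o2 @ stk Tm w s3" .
  have "subseq [r,m] s3" using P3 s3' mq qr by (cases P3) (auto simp: subseq_singleton_left)
  then have rm: "subseq [r,m] (stk Tm w s3)" using subseq_stk subseq_order.trans by blast
  have "subseq [q] o2" using qo by (simp add: subseq_singleton_left)
  from this rm have "subseq ([q] @ [r,m]) (o2 @ stk Tm w s3)" by (rule list_emb_append_mono)
  then have "subseq [q,r,m] (stk Tm x [])" unfolding o by (simp add: list_emb_append2)
  then show ?thesis unfolding c231 using mq qr by auto
qed

lemma T2_len: "\<forall>p\<in>set [[2::nat,1]]. 2 \<le> length p" by simp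
lemma T2_Nil: "avoids_all [[2,1]] []" by (simp add: avoids_all_def avoids_Nil)

lemma knuth_nec:
  assumes "contains [2,3,1] y"
  shows "\<not> sorted (stk [[2,1]] y [])"
proof
  assume so: "sorted (stk [[2,1]] y [])"
  obtain b c a where abc: "subseq [b,c,a] y" "a < b" "b < c" using assms unfolding c231 by blast
  obtain u y1 where y1: "y = u @ b # y1" "subseq [c,a] y1" using list_emb_ConsD[OF abc(1)] by auto
  obtain v y2 where y2: "y1 = v @ c # y2" "subseq [a] y2" using list_emb_ConsD[OF y1(2)] by auto
  have ay: "a \<in> set y2" using y2(2) by (simp add: subseq_singleton_left)
  define z where "z = u @ b # v @ [c]"
  have yz: "y = z @ y2" using y1 y2 z_def by simp
  define s where "s = snd (run [[2,1]] z [])"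
  define o1 where "o1 = fst (run [[2,1]] z [])"
  obtain s' where s': "s = c # s'" using run_top[of z "[[2,1]]" "[]"] s_def z_def by auto
  have vs: "avoids_all [[2,1]] s" using run_valid[OF T2_len T2_Nil] s_def by blast
  have "b \<in> set o1 \<union> set s" using set_run[of "[[2,1]]" z "[]"] o1_def s_def z_def by auto
  moreover have "b \<notin> set s"
  proof
    assume "b \<in> set s"
    then have "b \<in> set s'" using s' abc by auto
    then have "subseq [c,b] s" using s' by (simp add: subseq_singleton_left)
    then have "contains [2,1] s" unfolding c21 using abc by blast
    then show False using vs by (simp add: avoids_all_def avoids_def)
  qed
  ultimately have bo: "b \<in> set o1" by blast
  have "stk [[2,1]] y [] = o1 @ stk [[2,1]] y2 s"
    using stk_append[of "[[2,1]]" z y2 "[]"] yz o1_def s_def by simp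
  moreover have "a \<in> set (stk [[2,1]] y2 s)" using ay mset_stk[of "[[2,1]]" y2 s]
    by (metis Un_iff set_mset_mset set_mset_union)
  ultimately have "b \<le> a" using so bo by (simp add: sorted_append)
  then show False using abc by simp
qed


lemma av21: "avoids_all [[2,1]] L \<longleftrightarrow> \<not>(\<exists>a b. subseq [a,b] L \<and> b < a)"
  unfolding avoids_all_def avoids_def using c21[of L] by simp

lemma push21:
  assumes "sorted (y # st)"
  shows "avoids_all [[2,1]] (x # y # st) \<longleftrightarrow> (\<forall>z\<in>set (y#st). x \<le> z)"
proof
  assume A: "avoids_all [[2,1]] (x # y # st)"
  show "\<forall>z\<in>set (y#st). x \<le> z"
  proof (rule ccontr)
    assume "\<not> (\<forall>z\<in>set (y#st). x \<le> z)"
    then obtain z where "z \<in> set (y#st)" "z < x" by (meson not_le)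
    then have "subseq [x,z] (x#y#st)" by (auto simp: subseq_singleton_left)
    then show False using A \<open>z < x\<close> unfolding av21 by blast
  qed
next
  assume "\<forall>z\<in>set (y#st). x \<le> z"
  then have so: "sorted (x # y # st)" using assms by simp
  show "avoids_all [[2,1]] (x # y # st)" unfolding av21
  proof
    assume "\<exists>a b. subseq [a,b] (x # y # st) \<and> b < a"
    then obtain a b where ab: "subseq [a,b] (x # y # st)" "b < a" by blast
    have "sorted [a,b]" using subseq_sorted_wrt[OF ab(1)] so by simp
    then show False using ab by simp
  qed
qed

lemma knuth_suf:
  assumes "T = [[2,1]]" "sorted st" "\<not> contains [2,3,1] (rev st @ inp)"
  shows "sorted (stk T inp st)"
  using assms
proof (induction T inp st rule: stk.induct)
  case (1 T st)
  then show ?case by simp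
next
  case (2 T x inp)
  then show ?case by simp
next
  case (3 T x inp y st)
  show ?case
  proof (cases "avoids_all T (x # y # st)")
    case True
    then have "\<forall>z\<in>set (y#st). x \<le> z" using push21 3(3,4) by blast
    then have "sorted (x # y # st)" using 3(4) by simp
    then show ?thesis using 3(1)[OF True 3(3)] 3(5) True by simp
  next
    case False
    have "\<not> (\<forall>z\<in>set (y#st). x \<le> z)" using push21[OF 3(4)] False 3(3) by blast
    then obtain z where z: "z \<in> set (y#st)" "z < x" by (meson not_le)
    have yx: "y < x" using z 3(4) by auto
    have st: "sorted st" using 3(4) by simp
    have sub: "subseq (rev st @ x # inp) (rev st @ y # x # inp)"
      by (simp add: subseq_append' list_emb_Cons)
    have nc: "\<not> contains [2,3,1] (rev st @ x # inp)"
      using 3(5) contains_mono[OF _ sub] by auto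
    have IH: "sorted (stk T (x # inp) st)" using 3(2)[OF False 3(3) st nc] .
    have "\<forall>e\<in>set (stk T (x # inp) st). y \<le> e"
    proof
      fix e assume "e \<in> set (stk T (x # inp) st)"
      then have "e \<in> set (x # inp) \<or> e \<in> set st" using mset_stk[of T "x # inp" st]
        by (metis Un_iff set_mset_mset set_mset_union)
      then show "y \<le> e"
      proof
        assume "e \<in> set (x # inp)"
        show "y \<le> e"
        proof (rule ccontr)
          assume "\<not> y \<le> e"
          then have ey: "e < y" by simp
          then have "e \<in> set inp" using \<open>e \<in> set (x # inp)\<close> yx by auto
          then have "subseq [y,x,e] (y # x # inp)" by (simp add: subseq_singleton_left)
          then have "subseq [y,x,e] (rev st @ y # x # inp)" by (rule list_emb_append2)
          then have "contains [2,3,1] (rev st @ y # x # inp)" unfolding c231 using ey yx by blast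
          then show False using 3(5) by simp
        qed
      next
        assume "e \<in> set st" then show "y \<le> e" using 3(4) by simp
      qed
    qed
    then show ?thesis using IH False by simp
  qed
qed


definition Inv :: "nat \<Rightarrow> nat set \<Rightarrow> nat list \<Rightarrow> nat list \<Rightarrow> bool" where
 "Inv n Out inp st \<longleftrightarrow> distinct (st @ inp) \<and> Out \<union> set st \<union> set inp = {1..n} \<and>
   sorted_wrt (<) (tl st) \<and> \<not> contains [1,2,3] (rev st @ inp) \<and>
   (\<forall>y st' x inp'. st = y # st' \<longrightarrow> inp = x # inp' \<longrightarrow> y = Suc x \<longrightarrow> (\<forall>a\<in>set st'. \<not> a < x)) \<and>
   (\<forall>i. Suc i < length inp \<longrightarrow> inp!i = Suc (inp!(Suc i)) \<longrightarrow>
        (\<forall>a \<in> set st \<union> set (take i inp). \<not> a < inp!(Suc i))) \<and>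
   (\<forall>v\<in>Out. \<forall>z\<in>set inp. z < v) \<and>
   (\<forall>v\<in>Out. \<forall>y st'. st = y # st' \<longrightarrow> (\<exists>s\<in>set st'. s < y) \<longrightarrow> y < v)"

lemma InvI:
  assumes "distinct (st @ inp)" "Out \<union> set st \<union> set inp = {1..n}"
   "sorted_wrt (<) (tl st)" "\<not> contains [1,2,3] (rev st @ inp)"
   "\<forall>y st' x inp'. st = y # st' \<longrightarrow> inp = x # inp' \<longrightarrow> y = Suc x \<longrightarrow> (\<forall>a\<in>set st'. \<not> a < x)"
   "\<forall>i. Suc i < length inp \<longrightarrow> inp!i = Suc (inp!(Suc i)) \<longrightarrow>
        (\<forall>a \<in> set st \<union> set (take i inp). \<not> a < inp!(Suc i))"
   "\<forall>v\<in>Out. \<forall>z\<in>set inp. z < v"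
   "\<forall>v\<in>Out. \<forall>y st'. st = y # st' \<longrightarrow> (\<exists>s\<in>set st'. s < y) \<longrightarrow> y < v"
  shows "Inv n Out inp st"
  unfolding Inv_def by (intro conjI assms)

lemma InvD1: "Inv n Out inp st \<Longrightarrow> distinct (st @ inp)"
  unfolding Inv_def by (elim conjE) assumption

lemma InvD2: "Inv n Out inp st \<Longrightarrow> Out \<union> set st \<union> set inp = {1..n}"
  unfolding Inv_def by (elim conjE) assumption

lemma InvD3: "Inv n Out inp st \<Longrightarrow> sorted_wrt (<) (tl st)"
  unfolding Inv_def by (elim conjE) assumption

lemma InvD4: "Inv n Out inp st \<Longrightarrow> \<not> contains [1,2,3] (rev st @ inp)"
  unfolding Inv_def by (elim conjE) assumption

lemma InvD5: "Inv n Out inp st \<Longrightarrow> \<forall>y st' x inp'. st = y # st' \<longrightarrow> inp = x # inp' \<longrightarrow> y = Suc x \<longrightarrow> (\<forall>a\<in>set st'. \<not> a < x)"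
  unfolding Inv_def by (elim conjE) assumption

lemma InvD6: "Inv n Out inp st \<Longrightarrow> \<forall>i. Suc i < length inp \<longrightarrow> inp!i = Suc (inp!(Suc i)) \<longrightarrow>
        (\<forall>a \<in> set st \<union> set (take i inp). \<not> a < inp!(Suc i))"
  unfolding Inv_def by (elim conjE) assumption

lemma InvD7: "Inv n Out inp st \<Longrightarrow> \<forall>v\<in>Out. \<forall>z\<in>set inp. z < v"
  unfolding Inv_def by (elim conjE) assumption

lemma InvD8: "Inv n Out inp st \<Longrightarrow> \<forall>v\<in>Out. \<forall>y st'. st = y # st' \<longrightarrow> (\<exists>s\<in>set st'. s < y) \<longrightarrow> y < v"
  unfolding Inv_def by (elim conjE) assumption

lemmas InvD = InvD1 InvD2 InvD3 InvD4 InvD5 InvD6 InvD7 InvD8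

lemma inv_empty:
  assumes "Inv n Out (x # inp) []"
  shows "Inv n Out inp [x]"
proof -
  have P4b: "\<forall>i. Suc i < length (x#inp) \<longrightarrow> (x#inp)!i = Suc ((x#inp)!(Suc i)) \<longrightarrow>
        (\<forall>a \<in> set [] \<union> set (take i (x#inp)). \<not> a < (x#inp)!(Suc i))"
    using InvD(6)[OF assms] .
  have "\<forall>i. Suc i < length inp \<longrightarrow> inp!i = Suc (inp!(Suc i)) \<longrightarrow>
        (\<forall>a \<in> set [x] \<union> set (take i inp). \<not> a < inp!(Suc i))"
  proof (intro allI impI)
    fix i assume "Suc i < length inp" "inp!i = Suc (inp!(Suc i))"
    then show "\<forall>a \<in> set [x] \<union> set (take i inp). \<not> a < inp!(Suc i)"
      using P4b[rule_format, of "Suc i"] by simp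
  qed
  moreover note D = InvD[OF assms]
  ultimately show ?thesis by (intro InvI) auto
qed

lemma inv_push:
  assumes I: "Inv n Out (x # inp) (y # st)" and pu: "avoids_all Tm (x # y # st)"
  shows "Inv n Out inp (x # y # st)"
proof -
  note D = InvD[OF I]
  have d: "distinct (y # st @ x # inp)" using D(1) by simp
  have S: "Out \<union> set (y#st) \<union> set (x#inp) = {1..n}" using D(2) by simp
  have st: "sorted_wrt (<) st" using D(3) by simp
  have n123: "\<not> contains [1,2,3] (rev st @ y # x # inp)" using D(4) by simp
  have P4a: "\<And>a. y = Suc x \<Longrightarrow> a \<in> set st \<Longrightarrow> \<not> a < x" using D(5) by blast
  have P4b: "\<forall>i. Suc i < length (x#inp) \<longrightarrow> (x#inp)!i = Suc ((x#inp)!(Suc i)) \<longrightarrow>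
        (\<forall>a \<in> set (y#st) \<union> set (take i (x#inp)). \<not> a < (x#inp)!(Suc i))"
    using D(6) .
  have IO: "\<forall>v\<in>Out. \<forall>z\<in>set (x#inp). z < v" using D(7) .
  have J: "\<And>v s. v \<in> Out \<Longrightarrow> s \<in> set st \<Longrightarrow> s < y \<Longrightarrow> y < v" using D(8) by blast
  have pc: "\<forall>s\<in>set st. \<not>(x<s \<and> s<y) \<and> \<not>(s<y \<and> y<x)" using push_char[OF st] pu by blast
  have ys: "\<forall>s\<in>set st. y < s"
  proof
    fix s assume s: "s \<in> set st"
    show "y < s"
    proof (rule ccontr)
      assume "\<not> y < s"
      moreover have "s \<noteq> y" "s \<noteq> x" "x \<noteq> y" using d s by auto
      ultimately have sy: "s < y" by simp
      then have sx: "s < x" and xy: "x < y" using pc s \<open>s \<noteq> x\<close> \<open>x \<noteq> y\<close> by auto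
      show False
      proof (cases "y = Suc x")
        case True then show False using P4a s sx by blast
      next
        case False
        define v where "v = Suc x"
        have vy: "v < y" using False xy v_def by simp
        have "y \<in> {1..n}" using S by auto
        then have "v \<in> {1..n}" using vy v_def by auto
        then have "v \<in> Out \<or> v \<in> set (y#st) \<or> v \<in> set (x#inp)" using S by blast
        moreover have "v \<notin> Out" using J s sy vy by fastforce
        moreover have "v \<notin> set st" using pc vy v_def by fastforce
        moreover have "v \<notin> set inp"
        proof
          assume "v \<in> set inp"
          then have "subseq [x,v] (x # inp)" by (simp add: subseq_singleton_left)
          moreover have "subseq [s] (rev st @ [y])" using s by (simp add: subseq_singleton_left)
          ultimately have "subseq ([s] @ [x,v]) ((rev st @ [y]) @ (x # inp))"
            by (intro list_emb_append_mono)
          then have "contains [1,2,3] (rev st @ y # x # inp)" unfolding c123 using sx v_def by auto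
          then show False using n123 by blast
        qed
        ultimately show False using vy v_def by auto
      qed
    qed
  qed
  have "sorted_wrt (<) (tl (x # y # st))" using ys st by simp
  moreover have "\<forall>y' st' x' inp'. x # y # st = y' # st' \<longrightarrow> inp = x' # inp' \<longrightarrow> y' = Suc x' \<longrightarrow> (\<forall>a\<in>set st'. \<not> a < x')"
  proof (intro allI impI)
    fix y' st' x' inp' assume "x # y # st = y' # st'" "inp = x' # inp'" "y' = Suc x'"
    then show "\<forall>a\<in>set st'. \<not> a < x'" using P4b[rule_format, of 0] by auto
  qed
  moreover have "\<forall>i. Suc i < length inp \<longrightarrow> inp!i = Suc (inp!(Suc i)) \<longrightarrow>
        (\<forall>a \<in> set (x#y#st) \<union> set (take i inp). \<not> a < inp!(Suc i))"
  proof (intro allI impI)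
    fix i assume "Suc i < length inp" "inp!i = Suc (inp!(Suc i))"
    then show "\<forall>a \<in> set (x#y#st) \<union> set (take i inp). \<not> a < inp!(Suc i)"
      using P4b[rule_format, of "Suc i"] by auto
  qed
  moreover have "\<forall>v\<in>Out. \<forall>y' st'. x # y # st = y' # st' \<longrightarrow> (\<exists>s\<in>set st'. s < y') \<longrightarrow> y' < v"
    using IO by auto
  moreover have "distinct ((x # y # st) @ inp)" using d by auto
  moreover have "Out \<union> set (x # y # st) \<union> set inp = {1..n}" using S by auto
  moreover have "\<not> contains [1,2,3] (rev (x # y # st) @ inp)" using n123 by simp
  moreover have "\<forall>v\<in>Out. \<forall>z\<in>set inp. z < v" using IO by auto
  ultimately show ?thesis by (intro InvI)
qed


lemma inv_pop:
  assumes I: "Inv n Out (x # inp) (y # st)" and npu: "\<not> avoids_all Tm (x # y # st)"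
  shows "Inv n (insert y Out) (x # inp) st" "\<forall>z\<in>set (x#inp). z < y" "sorted_wrt (<) st" "st \<noteq> []"
proof -
  note D = InvD[OF I]
  have d: "distinct (y # st @ x # inp)" using D(1) by simp
  have S: "Out \<union> set (y#st) \<union> set (x#inp) = {1..n}" using D(2) by simp
  show st: "sorted_wrt (<) st" using D(3) by simp
  have n123: "\<not> contains [1,2,3] (rev st @ y # x # inp)" using D(4) by simp
  have P4b: "\<forall>i. Suc i < length (x#inp) \<longrightarrow> (x#inp)!i = Suc ((x#inp)!(Suc i)) \<longrightarrow>
        (\<forall>a \<in> set (y#st) \<union> set (take i (x#inp)). \<not> a < (x#inp)!(Suc i))"
    using D(6) .
  have IO: "\<forall>v\<in>Out. \<forall>z\<in>set (x#inp). z < v" using D(7) .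
  have "\<not> (\<forall>s\<in>set st. \<not>(x<s \<and> s<y) \<and> \<not>(s<y \<and> y<x))" using push_char[OF st] npu by blast
  then obtain s where s: "s \<in> set st" "s < y" by blast
  then show "st \<noteq> []" by auto
  have zy: "\<forall>z\<in>set (x#inp). z < y"
  proof
    fix z assume z: "z \<in> set (x#inp)"
    show "z < y"
    proof (rule ccontr)
      assume "\<not> z < y"
      moreover have "z \<noteq> y" using d z by auto
      ultimately have yz: "y < z" by simp
      have Z: "subseq [z] (x # inp)" using z by (auto simp: subseq_singleton_left)
      have SY: "subseq ([s] @ [y]) (rev st @ [y])" unfolding subseq_append using s by (simp add: subseq_singleton_left)
      from SY Z have "subseq (([s] @ [y]) @ [z]) ((rev st @ [y]) @ (x # inp))"
        by (rule list_emb_append_mono)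
      then have "contains [1,2,3] (rev st @ y # x # inp)" unfolding c123 using s yz by auto
      then show False using n123 by blast
    qed
  qed
  then show "\<forall>z\<in>set (x#inp). z < y" .
  have "sorted_wrt (<) (tl st)" using st by (cases st) auto
  moreover have "\<forall>y' st' x' inp'. st = y' # st' \<longrightarrow> x # inp = x' # inp' \<longrightarrow> y' = Suc x' \<longrightarrow> (\<forall>a\<in>set st'. \<not> a < x')"
    using st by fastforce
  moreover have "\<forall>i. Suc i < length (x#inp) \<longrightarrow> (x#inp)!i = Suc ((x#inp)!(Suc i)) \<longrightarrow>
        (\<forall>a \<in> set st \<union> set (take i (x#inp)). \<not> a < (x#inp)!(Suc i))"
    using P4b by auto
  moreover have "\<forall>v\<in>insert y Out. \<forall>z\<in>set (x#inp). z < v" using IO zy by auto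
  moreover have "\<forall>v\<in>insert y Out. \<forall>y' st'. st = y' # st' \<longrightarrow> (\<exists>s\<in>set st'. s < y') \<longrightarrow> y' < v"
    using st by fastforce
  moreover have "distinct (st @ x # inp)" using d by auto
  moreover have "insert y Out \<union> set st \<union> set (x # inp) = {1..n}" using S by auto
  moreover have "\<not> contains [1,2,3] (rev st @ x # inp)"
  proof
    assume "contains [1,2,3] (rev st @ x # inp)"
    moreover have "subseq (rev st @ x # inp) (rev st @ y # x # inp)"
      by (simp add: subseq_append' list_emb_Cons)
    ultimately show False using n123 contains_mono by blast
  qed
  ultimately show "Inv n (insert y Out) (x # inp) st" by (intro InvI)
qed

lemma sorted_push:
  assumes "sorted_wrt (<) (y # st)"
  shows "avoids_all Tm (x # y # st)"
  using assms push_char[of st x y] by auto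

lemma suffix:
  assumes "T = Tm" "Inv n Out inp st"
  shows "(\<exists>pre. stk T inp st = pre @ tl st) \<and> (sorted_wrt (<) st \<longrightarrow> (\<exists>pre. stk T inp st = pre @ st))"
  using assms
proof (induction T inp st arbitrary: Out rule: stk.induct)
  case (1 T st)
  then show ?case by (cases st) auto
next
  case (2 T x inp)
  then show ?case by auto
next
  case (3 T x inp y st)
  show ?case
  proof (cases "avoids_all T (x # y # st)")
    case True
    have "Inv n Out inp (x # y # st)" using inv_push 3(4) True 3(3) by blast
    then obtain pre where "stk T inp (x # y # st) = pre @ (y # st)"
      using 3(1)[OF True 3(3)] by auto
    then show ?thesis using True by (metis append.assoc append_Cons append_Nil list.sel(3) stk.simps(3))
  next
    case False
    note P = inv_pop[OF 3(4)[unfolded 3(3)] False[unfolded 3(3)]]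
    obtain pre where "stk T (x # inp) st = pre @ st" using 3(2)[OF False 3(3) P(1)] P(3) by blast
    moreover have "\<not> sorted_wrt (<) (y # st)" using sorted_push False 3(3) by blast
    ultimately show ?thesis using False by auto
  qed
qed

lemma main_suf:
  assumes "T = Tm" "Inv n Out inp st"
  shows "\<not> contains [2,3,1] (stk T inp st)"
  using assms
proof (induction T inp st arbitrary: Out rule: stk.induct)
  case (1 T st)
  have so: "sorted_wrt (<) (tl st)" using InvD(3)[OF 1(2)] .
  show ?case
  proof (cases st)
    case Nil then show ?thesis by (simp add: avoids_Nil[unfolded avoids_def])
  next
    case (Cons y D)
    have soD: "sorted_wrt (<) D" using so Cons by simp
    show ?thesis
    proof
      assume "contains [2,3,1] (stk T [] st)"
      then obtain a b c where abc: "subseq [a,b,c] (y # D)" "c < a" "a < b"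
        unfolding c231 Cons by auto
      then have "subseq [b,c] D \<or> subseq [a,b,c] D" unfolding subseq_CC[of a] by auto
      then show False
      proof
        assume h: "subseq [b,c] D" from sorted_sub2[OF h soD] show False using abc by simp
      next
        assume h: "subseq [a,b,c] D" from sorted_sub3[OF h soD] show False using abc by simp
      qed
    qed
  qed
next
  case (2 T x inp)
  have "\<not> contains [2,3,1] (stk T inp [x])" using 2(1)[OF 2(2) inv_empty[OF 2(3)]] .
  then show ?case by simp
next
  case (3 T x inp y st)
  show ?case
  proof (cases "avoids_all T (x # y # st)")
    case True
    have "Inv n Out inp (x # y # st)" using inv_push 3(4) True 3(3) by blast
    then show ?thesis using 3(1)[OF True 3(3)] True by simp
  next
    case False
    note P = inv_pop[OF 3(4)[unfolded 3(3)] False[unfolded 3(3)]]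
    define rest where "rest = stk T (x # inp) st"
    have IH: "\<not> contains [2,3,1] rest" using 3(2)[OF False 3(3) P(1)] rest_def by blast
    obtain pre where pre: "rest = pre @ st" using suffix[OF 3(3) P(1)] P(3) rest_def by blast
    have "mset pre = mset (x # inp)" using mset_stk[of T "x # inp" st] pre rest_def by simp
    then have setpre: "set pre = set (x # inp)" by (metis set_mset_mset)
    have out: "stk T (x # inp) (y # st) = y # rest" using False rest_def by simp
    show ?thesis unfolding out
    proof
      assume "contains [2,3,1] (y # rest)"
      then obtain a b c where abc: "subseq [a,b,c] (y # rest)" "c < a" "a < b"
        unfolding c231 by auto
      then have "(a = y \<and> subseq [b,c] rest) \<or> subseq [a,b,c] rest" unfolding subseq_CC[of a] by auto
      then show False
      proof
        assume "subseq [a,b,c] rest" then show False using IH abc unfolding c231 by blast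
      next
        assume A: "a = y \<and> subseq [b,c] rest"
        then have "subseq [b,c] (pre @ st)" using pre by simp
        then obtain xs1 xs2 where xs: "[b,c] = xs1 @ xs2" "subseq xs1 pre" "subseq xs2 st"
          using subseq_append_iff[THEN iffD1] by blast
        show False
        proof (cases xs1)
          case Nil
          then have h: "subseq [b,c] st" using xs by simp
          from sorted_sub2[OF h P(3)] show False using abc by simp
        next
          case (Cons h t)
          then have "h = b" using xs(1) by simp
          then have "b \<in> set xs1" using Cons by simp
          then have "b \<in> set pre" using subseq_set[OF xs(2)] by blast
          then show False using P(2) setpre A abc by auto
        qed
      qed
    qed
  qed
qed


lemma inv_init:
  assumes "x \<in> perms n" "avoids [1,2,3] x" "\<not> contains_132star x"
  shows "Inv n {} x []"
proof (rule InvI)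
  show "distinct ([] @ x)" using assms(1) by (simp add: perms_def)
  show "{} \<union> set [] \<union> set x = {1..n}" using assms(1) by (simp add: perms_def)
  show "\<not> contains [1,2,3] (rev [] @ x)" using assms(2) by (simp add: avoids_def)
  show "\<forall>i. Suc i < length x \<longrightarrow> x!i = Suc (x!(Suc i)) \<longrightarrow>
        (\<forall>a \<in> set [] \<union> set (take i x). \<not> a < x!(Suc i))"
  proof (intro allI impI ballI notI)
    fix i a assume h: "Suc i < length x" "x!i = Suc (x!(Suc i))" "a \<in> set [] \<union> set (take i x)" "a < x!(Suc i)"
    then obtain j where j: "j < length (take i x)" "take i x ! j = a" by (auto simp: in_set_conv_nth)
    then have "j < i" "x ! j = a" by auto
    then have "contains_132star x" unfolding contains_132star_def using h
      by (intro exI[of _ j] exI[of _ i]) auto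
    then show False using assms(3) by blast
  qed
  show "sorted_wrt (<) (tl ([]::nat list))" by simp
  show "\<forall>y st' x' inp'. ([]::nat list) = y # st' \<longrightarrow> x = x' # inp' \<longrightarrow> y = Suc x' \<longrightarrow> (\<forall>a\<in>set st'. \<not> a < x')" by simp
  show "\<forall>v\<in>{}. \<forall>z\<in>set x. z < v" by simp
  show "\<forall>v\<in>({}::nat set). \<forall>y st'. ([]::nat list) = y # st' \<longrightarrow> (\<exists>s\<in>set st'. s < y) \<longrightarrow> y < v" by simp
qed

lemma sort_iff:
  assumes "x \<in> perms n"
  shows "west_s (s_T [[1,3,2],[3,2,1]] x) = [1..<n+1] \<longleftrightarrow> sorted (west_s (s_T [[1,3,2],[3,2,1]] x))"
proof -
  define z where "z = west_s (s_T [[1,3,2],[3,2,1]] x)"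
  have mz: "mset z = mset x" unfolding z_def west_s_def s_T_def
    by (simp only: mset_stk mset.simps add_0_right)
  have sx: "set x = set [1..<n+1]" using assms unfolding perms_def
    by (simp only: set_upt atLeastLessThanSuc_atLeastAtMost Suc_eq_plus1[symmetric] mem_Collect_eq)
  have "mset x = mset [1..<n+1]"
    using set_eq_iff_mset_eq_distinct[THEN iffD1, OF _ distinct_upt sx] assms unfolding perms_def by blast
  then have m: "mset z = mset [1..<n+1]" using mz by simp
  have "z = [1..<n+1] \<longleftrightarrow> sorted z"
  proof
    assume "sorted z"
    then have "sort [1..<n+1] = z" using properties_for_sort[OF m] by simp
    moreover have "sort [1..<n+1] = [1..<n+1]" by (rule sorted_sort_id) (rule sorted_upt)
    ultimately show "z = [1..<n+1]" by simp
  next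
    assume "z = [1..<n+1]"
    then show "sorted z" using sorted_upt by metis
  qed
  then show ?thesis unfolding z_def .
qed

theorem theorem3p7:
  shows "\<forall>n. Sort n [1,3,2] [3,2,1] = Av_123_132star n"
proof
  fix n
  show "Sort n [1,3,2] [3,2,1] = Av_123_132star n"
  proof (rule set_eqI)
    fix x
    show "x \<in> Sort n [1,3,2] [3,2,1] \<longleftrightarrow> x \<in> Av_123_132star n"
    proof (cases "x \<in> perms n")
      case False
      then show ?thesis unfolding Sort_def Av_123_132star_def by simp
    next
      case True
      have dx: "distinct x" using True by (simp add: perms_def)
      have y: "s_T [[1,3,2],[3,2,1]] x = stk Tm x []" by (simp add: s_T_def Tm_def)
      have w: "west_s L = stk [[2,1]] L []" for L by (simp add: west_s_def s_T_def)
      have "x \<in> Sort n [1,3,2] [3,2,1] \<longleftrightarrow> sorted (stk [[2,1]] (stk Tm x []) [])"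
        unfolding Sort_def using sort_iff[OF True] True y w by simp
      also have "\<dots> \<longleftrightarrow> avoids [1,2,3] x \<and> \<not> contains_132star x"
      proof
        assume so: "sorted (stk [[2,1]] (stk Tm x []) [])"
        have n231: "\<not> contains [2,3,1] (stk Tm x [])" using knuth_nec so by blast
        have "\<not> contains [1,2,3] x"
        proof
          assume "contains [1,2,3] x"
          then obtain p q r where pqr: "subseq [p,q,r] x" "p < q" "q < r" unfolding c123 by blast
          obtain u0 x1 where x1: "x = u0 @ p # x1" "subseq [q,r] x1" using list_emb_ConsD[OF pqr(1)] by auto
          obtain u1 x2 where x2: "x1 = u1 @ q # x2" "subseq [r] x2" using list_emb_ConsD[OF x1(2)] by auto
          obtain u2 w where x3: "x2 = u2 @ r # w" using list_emb_ConsD[OF x2(2)] by auto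
          have "x = (u0 @ p # u1) @ q # u2 @ r # w" using x1 x2 x3 by simp
          from nec123[OF dx this _ pqr(2,3)] show False using n231 by simp
        qed
        moreover have "\<not> contains_132star x"
        proof
          assume "contains_132star x"
          then obtain a b where ab: "a < b" "b + 1 < length x" "x ! a < x ! (b + 1)" "x ! b = x ! (b + 1) + 1"
            unfolding contains_132star_def by blast
          have "x = take b x @ drop b x" by simp
          also have "drop b x = x ! b # drop (Suc b) x" using ab(2) by (simp add: Cons_nth_drop_Suc)
          also have "drop (Suc b) x = x ! (b+1) # drop (Suc (Suc b)) x" using ab(2) by (simp add: Cons_nth_drop_Suc)
          finally have xe: "x = take b x @ x ! b # x ! (b+1) # drop (Suc (Suc b)) x" .
          have "x ! a \<in> set (take b x)" using ab by (auto simp: in_set_conv_nth intro!: exI[of _ a])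
          from nec132[OF dx xe this ab(3)] ab(4) show False using n231 by simp
        qed
        ultimately show "avoids [1,2,3] x \<and> \<not> contains_132star x" by (simp add: avoids_def)
      next
        assume av: "avoids [1,2,3] x \<and> \<not> contains_132star x"
        have "Inv n {} x []" using inv_init True av by blast
        then have "\<not> contains [2,3,1] (stk Tm x [])" using main_suf by blast
        then show "sorted (stk [[2,1]] (stk Tm x []) [])" using knuth_suf[of "[[2,1]]" "[]"] by simp
      qed
      finally show ?thesis unfolding Av_123_132star_def using True by simp
    qed
  qed
qed

end
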